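(* Let $\theta$ be a linear operator on $\Lambda$ that is shift-invariant, i.e. $E^a\theta=\theta E^a$ for all $a\in\mathbb C$. Then $$\theta=\sum_{\lambda\in\mathcal P}\big(\epsilon\,\theta\, m_\lambda(\mathbf y)\big)\,\mathbf D_\lambda,$$ meaning that $\theta p=\sum_{\lambda}(\epsilon\,\theta\, m_\lambda)\,\mathbf D_\lambda p$ for all $p\in\Lambda$.
   Context: $\Lambda$ is the algebra of complex symmetric functions in $\mathbf y=(y_1,y_2,\dots)$. $\mathcal P$ is the set of all partitions and $m_\lambda$ is the monomial symmetric function. $\mathbf D_i$ ($i\ge1$) is the linear operator with $\mathbf D_im_\lambda=i!\,m_{\lambda\setminus i}$ if $i$ is a part of $\lambda$ (one part $i$ removed), and $0$ otherwise. $\mathbf D_\lambda=\prod_{i:\lambda_i>0}\mathbf D_{\lambda_i}/\lambda_i!$, with $\mathbf D_\emptyset$ the identity. These operators commute. $E^ap(y_1,\dots)=p(a,y_1,\dots)$ and $\epsilon p=p(0,0,\dots)$. The sum acts finitely on each $p$. *)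

theory Defs
  imports Complex_Main "HOL-Library.Multiset"
begin

text \<open>Symmetric functions in y = (y_0, y_1, ...) as formal power series:
  a series is a coefficient function on exponent vectors (nat => nat).\<close>

type_synonym series = "(nat \<Rightarrow> nat) \<Rightarrow> complex"

definition supp :: "(nat \<Rightarrow> nat) \<Rightarrow> nat set" where
  "supp \<beta> = {i. \<beta> i \<noteq> 0}"

definition mdeg :: "(nat \<Rightarrow> nat) \<Rightarrow> nat" where
  "mdeg \<beta> = sum \<beta> (supp \<beta>)"

definition Lam :: "series set" where
  "Lam = {p. (\<forall>\<beta>. p \<beta> \<noteq> 0 \<longrightarrow> finite (supp \<beta>))
           \<and> (\<exists>d. \<forall>\<beta>. p \<beta> \<noteq> 0 \<longrightarrow> mdeg \<beta> \<le> d)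
           \<and> (\<forall>\<pi> \<beta>. bij \<pi> \<longrightarrow> p (\<beta> \<circ> \<pi>) = p \<beta>)}"

definition partitions :: "nat multiset set" where
  "partitions = {\<mu>. 0 \<notin># \<mu>}"

definition parts :: "(nat \<Rightarrow> nat) \<Rightarrow> nat multiset" where
  "parts \<beta> = image_mset \<beta> (mset_set (supp \<beta>))"

definition msym :: "nat multiset \<Rightarrow> series" where
  "msym \<mu> \<beta> = (if finite (supp \<beta>) \<and> parts \<beta> = \<mu> then 1 else 0)"

text \<open>Representative exponent vector of a partition and coefficient of m_lambda.\<close>
definition mono :: "nat multiset \<Rightarrow> nat \<Rightarrow> nat" where
  "mono \<mu> i = (if i < size \<mu> then sorted_list_of_multiset \<mu> ! i else 0)"

definition coeffP :: "series \<Rightarrow> nat multiset \<Rightarrow> complex" where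
  "coeffP p \<mu> = p (mono \<mu>)"

definition Dop :: "nat \<Rightarrow> series \<Rightarrow> series" where
  "Dop i p = (\<lambda>\<beta>. \<Sum>\<mu>\<in>{\<mu>\<in>partitions. coeffP p \<mu> \<noteq> 0}.
      coeffP p \<mu> * (if i \<in># \<mu> then of_nat (fact i) * msym (\<mu> - {#i#}) \<beta> else 0))"

definition Dlam :: "nat multiset \<Rightarrow> series \<Rightarrow> series" where
  "Dlam \<mu> p = foldr (\<lambda>i q. (\<lambda>\<beta>. Dop i q \<beta> / of_nat (fact i))) (sorted_list_of_multiset \<mu>) p"

text \<open>E^a p (y_0, y_1, ...) = p(a, y_0, y_1, ...).\<close>
definition shiftmon :: "nat \<Rightarrow> (nat \<Rightarrow> nat) \<Rightarrow> nat \<Rightarrow> nat" where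
  "shiftmon k \<beta> = (\<lambda>i. if i = 0 then k else \<beta> (i - 1))"

definition Eop :: "complex \<Rightarrow> series \<Rightarrow> series" where
  "Eop a p = (\<lambda>\<beta>. \<Sum>k\<in>{k. p (shiftmon k \<beta>) \<noteq> 0}. a ^ k * p (shiftmon k \<beta>))"

definition eps :: "series \<Rightarrow> complex" where
  "eps p = p (\<lambda>_. 0)"

definition linear_on_Lam :: "(series \<Rightarrow> series) \<Rightarrow> bool" where
  "linear_on_Lam \<theta> \<longleftrightarrow> (\<forall>p\<in>Lam. \<theta> p \<in> Lam)
     \<and> (\<forall>p\<in>Lam. \<forall>q\<in>Lam. \<theta> (\<lambda>\<beta>. p \<beta> + q \<beta>) = (\<lambda>\<beta>. \<theta> p \<beta> + \<theta> q \<beta>))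
     \<and> (\<forall>c. \<forall>p\<in>Lam. \<theta> (\<lambda>\<beta>. c * p \<beta>) = (\<lambda>\<beta>. c * \<theta> p \<beta>))"

end

theory Submission
  imports Defs "HOL-Library.Infinite_Set"
begin

lemma mset_bij:
  assumes "finite A" "finite B" "image_mset f (mset_set A) = image_mset g (mset_set B)"
  shows "\<exists>h. bij_betw h A B \<and> (\<forall>x\<in>A. g (h x) = f x)"
  using assms
proof (induction A arbitrary: B rule: finite_induct)
  case empty
  then have "B = {}" by (simp add: mset_set_empty_iff)
  then show ?case by (simp add: bij_betw_def)
next
  case (insert a A)
  have eq: "add_mset (f a) (image_mset f (mset_set A)) = image_mset g (mset_set B)"
    using insert by simp
  have "f a \<in># image_mset g (mset_set B)" unfolding eq[symmetric] by simp
  then obtain b where b: "b \<in> B" "g b = f a" using insert.prems(1) by auto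
  have "image_mset f (mset_set A) = image_mset g (mset_set (B - {b}))"
    using insert(1,2,5) b by (simp add: mset_set.remove[OF insert(4) b(1)])
  then obtain h where h: "bij_betw h A (B - {b})" "\<forall>x\<in>A. g (h x) = f x"
    using insert by blast
  define h' where "h' = (\<lambda>x. if x = a then b else h x)"
  have "bij_betw h' (insert a A) B"
  proof -
    have "bij_betw h' A (B - {b})" using h(1) insert(2) unfolding h'_def
      by (smt (verit, best) bij_betw_cong)
    moreover have "bij_betw h' {a} {b}" by (simp add: h'_def bij_betw_def)
    ultimately have "bij_betw h' (A \<union> {a}) ((B - {b}) \<union> {b})"
      by (intro bij_betw_combine) auto
    then show ?thesis using b(1) by (simp add: insert_absorb)
  qed
  moreover have "\<forall>x\<in>insert a A. g (h' x) = f x" using h b insert(2) by (auto simp: h'_def)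
  ultimately show ?case by blast
qed

lemma supp_comp: "bij \<pi> \<Longrightarrow> supp (\<beta> \<circ> \<pi>) = \<pi> -` supp \<beta>"
  by (auto simp: supp_def)

lemma finite_vimage_bij: "bij \<pi> \<Longrightarrow> finite (\<pi> -` A) \<longleftrightarrow> finite A"
  by (metis bij_def bij_is_inj finite_imageI finite_vimageI surj_image_vimage_eq)

lemma parts_comp: assumes "bij \<pi>" "finite (supp \<beta>)" shows "parts (\<beta> \<circ> \<pi>) = parts \<beta>"
proof -
  have "parts (\<beta> \<circ> \<pi>) = image_mset \<beta> (image_mset \<pi> (mset_set (\<pi> -` supp \<beta>)))"
    by (simp add: parts_def supp_comp[OF assms(1)] multiset.map_comp)
  also have "image_mset \<pi> (mset_set (\<pi> -` supp \<beta>)) = mset_set (\<pi> ` (\<pi> -` supp \<beta>))"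
    using assms by (intro image_mset_mset_set) (auto simp: bij_def inj_on_def)
  also have "\<pi> ` (\<pi> -` supp \<beta>) = supp \<beta>" using assms(1) by (simp add: bij_def surj_image_vimage_eq)
  finally show ?thesis by (simp add: parts_def comp_def)
qed

lemma mdeg_parts: "finite (supp \<beta>) \<Longrightarrow> mdeg \<beta> = sum_mset (parts \<beta>)"
  by (simp add: mdeg_def parts_def sum_unfold_sum_mset)

lemma msym_Lam: "msym \<mu> \<in> Lam"
  unfolding Lam_def
proof (intro CollectI conjI allI impI)
  show "\<exists>d. \<forall>\<beta>. msym \<mu> \<beta> \<noteq> 0 \<longrightarrow> mdeg \<beta> \<le> d"
    by (rule exI[of _ "sum_mset \<mu>"]) (auto simp: msym_def mdeg_parts split: if_splits)
next
  fix \<pi> :: "nat \<Rightarrow> nat" and \<beta> :: "nat \<Rightarrow> nat" assume "bij \<pi>"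
  then show "msym \<mu> (\<beta> \<circ> \<pi>) = msym \<mu> \<beta>"
    by (auto simp: msym_def supp_comp finite_vimage_bij parts_comp)
qed (auto simp: msym_def split: if_splits)

lemma Lam_sym:
  assumes "p \<in> Lam" "finite (supp \<beta>)" "finite (supp \<beta>')" "parts \<beta>' = parts \<beta>"
  shows "p \<beta>' = p \<beta>"
proof -
  obtain h where h: "bij_betw h (supp \<beta>') (supp \<beta>)" "\<forall>x\<in>supp \<beta>'. \<beta> (h x) = \<beta>' x"
    using mset_bij[OF assms(3,2)] assms(4) unfolding parts_def by metis
  have i1: "infinite (- supp \<beta>')" "infinite (- supp \<beta>)"
    using assms(2,3) by (metis finite_Un infinite_UNIV_nat sup_compl_top)+
  define k where "k = enumerate (- supp \<beta>) \<circ> the_inv_into UNIV (enumerate (- supp \<beta>'))"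
  have "bij_betw (the_inv_into UNIV (enumerate (- supp \<beta>'))) (- supp \<beta>') UNIV"
    using bij_enumerate[OF i1(1)] by (rule bij_betw_the_inv_into)
  then have k: "bij_betw k (- supp \<beta>') (- supp \<beta>)"
    unfolding k_def using bij_enumerate[OF i1(2)] by (rule bij_betw_trans)
  define \<pi> where "\<pi> = (\<lambda>x. if x \<in> supp \<beta>' then h x else k x)"
  have "bij_betw \<pi> (supp \<beta>' \<union> - supp \<beta>') (supp \<beta> \<union> - supp \<beta>)"
    apply (rule bij_betw_combine)
    using h(1) k by (auto simp: \<pi>_def intro: bij_betw_cong[THEN iffD1])
  then have b: "bij \<pi>" by simp
  have "\<beta>' = \<beta> \<circ> \<pi>"
  proof
    fix x show "\<beta>' x = (\<beta> \<circ> \<pi>) x"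
    proof (cases "x \<in> supp \<beta>'")
      case True then show ?thesis using h(2) by (simp add: \<pi>_def)
    next
      case False
      then have "k x \<in> - supp \<beta>" using k by (auto simp: bij_betw_def)
      then show ?thesis using False by (simp add: \<pi>_def supp_def)
    qed
  qed
  then show ?thesis using assms(1) b unfolding Lam_def by auto
qed

lemma Lam_add: assumes "p \<in> Lam" "q \<in> Lam" shows "(\<lambda>\<beta>. p \<beta> + q \<beta>) \<in> Lam"
proof -
  have p1: "\<And>\<beta>. p \<beta> \<noteq> 0 \<Longrightarrow> finite (supp \<beta>)" and q1: "\<And>\<beta>. q \<beta> \<noteq> 0 \<Longrightarrow> finite (supp \<beta>)"
    and p3: "\<And>\<pi> \<beta>. bij \<pi> \<Longrightarrow> p (\<beta> \<circ> \<pi>) = p \<beta>" and q3: "\<And>\<pi> \<beta>. bij \<pi> \<Longrightarrow> q (\<beta> \<circ> \<pi>) = q \<beta>"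
    using assms by (auto simp: Lam_def)
  obtain d1 d2 where p2: "\<And>\<beta>. p \<beta> \<noteq> 0 \<Longrightarrow> mdeg \<beta> \<le> d1" and q2: "\<And>\<beta>. q \<beta> \<noteq> 0 \<Longrightarrow> mdeg \<beta> \<le> d2"
    using assms by (auto simp: Lam_def)
  have "\<And>\<beta>. p \<beta> + q \<beta> \<noteq> 0 \<Longrightarrow> finite (supp \<beta>)"
    by (metis p1 q1 add.right_neutral add_0)
  moreover have "\<And>\<beta>. p \<beta> + q \<beta> \<noteq> 0 \<Longrightarrow> mdeg \<beta> \<le> max d1 d2"
    by (metis p2 q2 add.right_neutral add_0 max.coboundedI1 max.coboundedI2)
  ultimately show ?thesis using p3 q3 unfolding Lam_def by auto
qed

lemma Lam_scale: "p \<in> Lam \<Longrightarrow> (\<lambda>\<beta>. c * p \<beta>) \<in> Lam"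
  unfolding Lam_def by auto

lemma Lam_zero: "(\<lambda>\<beta>. 0) \<in> Lam"
  unfolding Lam_def by auto

lemma Lam_sum: "finite J \<Longrightarrow> (\<forall>j\<in>J. q j \<in> Lam) \<Longrightarrow> (\<lambda>\<beta>. \<Sum>j\<in>J. c j * q j \<beta>) \<in> Lam"
proof (induction J rule: finite_induct)
  case empty then show ?case by (simp add: Lam_zero)
next
  case (insert x F)
  then show ?case using Lam_add[OF Lam_scale[of "q x" "c x"] insert.IH] by simp
qed

lemma theta_zero: "linear_on_Lam \<theta> \<Longrightarrow> \<theta> (\<lambda>\<beta>. 0) = (\<lambda>\<beta>. 0)"
proof -
  assume "linear_on_Lam \<theta>"
  then have H: "\<And>c p. p \<in> Lam \<Longrightarrow> \<theta> (\<lambda>\<beta>. c * p \<beta>) = (\<lambda>\<beta>. c * \<theta> p \<beta>)"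
    unfolding linear_on_Lam_def by blast
  from H[OF Lam_zero, of 0] show ?thesis by simp
qed

lemma theta_sum:
  assumes "linear_on_Lam \<theta>" "finite J" "\<forall>j\<in>J. q j \<in> Lam"
  shows "\<theta> (\<lambda>\<beta>. \<Sum>j\<in>J. c j * q j \<beta>) = (\<lambda>\<beta>. \<Sum>j\<in>J. c j * \<theta> (q j) \<beta>)"
  using assms(2,3)
proof (induction J rule: finite_induct)
  case empty then show ?case using theta_zero[OF assms(1)] by simp
next
  case (insert x F)
  have "\<theta> (\<lambda>\<beta>. \<Sum>j\<in>insert x F. c j * q j \<beta>) = \<theta> (\<lambda>\<beta>. c x * q x \<beta> + (\<Sum>j\<in>F. c j * q j \<beta>))"
    using insert by simp
  also have "\<dots> = (\<lambda>\<beta>. \<theta> (\<lambda>\<beta>. c x * q x \<beta>) \<beta> + \<theta> (\<lambda>\<beta>. \<Sum>j\<in>F. c j * q j \<beta>) \<beta>)"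
    using assms(1) Lam_scale[of "q x" "c x"] Lam_sum[of F q c] insert unfolding linear_on_Lam_def by auto
  also have "\<dots> = (\<lambda>\<beta>. c x * \<theta> (q x) \<beta> + (\<Sum>j\<in>F. c j * \<theta> (q j) \<beta>))"
    using assms(1) insert unfolding linear_on_Lam_def by auto
  finally show ?case using insert by simp
qed

lemma partition_parts: "parts \<beta> \<in> partitions"
  by (cases "finite (supp \<beta>)") (auto simp: partitions_def parts_def supp_def)

lemma supp_mono: assumes "\<nu> \<in> partitions" shows "supp (mono \<nu>) = {..<size \<nu>}"
proof -
  have "i < size \<nu> \<Longrightarrow> sorted_list_of_multiset \<nu> ! i \<noteq> 0" for i
  proof -
    assume "i < size \<nu>"
    moreover have "length (sorted_list_of_multiset \<nu>) = size \<nu>"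
      using size_mset[of "sorted_list_of_multiset \<nu>"] by simp
    ultimately have "sorted_list_of_multiset \<nu> ! i \<in> set (sorted_list_of_multiset \<nu>)"
      by (intro nth_mem) simp
    then have "sorted_list_of_multiset \<nu> ! i \<in># \<nu>" by simp
    then show "sorted_list_of_multiset \<nu> ! i \<noteq> 0" using assms unfolding partitions_def
      by (cases "sorted_list_of_multiset \<nu> ! i") auto
  qed
  then show ?thesis unfolding supp_def mono_def by (intro set_eqI) simp
qed

lemma len_sl: "length (sorted_list_of_multiset \<nu>) = size \<nu>"
  using size_mset[of "sorted_list_of_multiset \<nu>"] by simp

lemma parts_mono: assumes "\<nu> \<in> partitions" shows "parts (mono \<nu>) = \<nu>"
proof -
  let ?xs = "sorted_list_of_multiset \<nu>"
  have "parts (mono \<nu>) = image_mset (mono \<nu>) (mset [0..<length ?xs])"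
    by (simp add: parts_def supp_mono[OF assms] len_sl mset_set_upto_eq_mset_upto)
  also have "\<dots> = mset (map (mono \<nu>) [0..<length ?xs])" by simp
  also have "map (mono \<nu>) [0..<length ?xs] = map (nth ?xs) [0..<length ?xs]"
    by (auto simp: mono_def len_sl)
  also have "\<dots> = ?xs" by (simp add: map_nth)
  finally show ?thesis by simp
qed
lemma size_le_sum_mset: "0 \<notin># (\<nu>::nat multiset) \<Longrightarrow> size \<nu> \<le> sum_mset \<nu>"
  by (induction \<nu>) auto

lemma mem_le_sum_mset: "x \<in># (\<nu>::nat multiset) \<Longrightarrow> x \<le> sum_mset \<nu>"
  by (metis multi_member_split sum_mset.add_mset le_add1)

lemma finite_partitions_bounded: "finite {\<nu>\<in>partitions. sum_mset \<nu> \<le> d}"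
proof (rule finite_subset)
  show "{\<nu>\<in>partitions. sum_mset \<nu> \<le> d} \<subseteq> (\<Union>k\<le>d. multisets_of_size {..d} k)"
  proof
    fix \<nu> assume a: "\<nu> \<in> {\<nu>\<in>partitions. sum_mset \<nu> \<le> d}"
    then have "size \<nu> \<le> d" using size_le_sum_mset[of \<nu>] by (auto simp: partitions_def)
    moreover have "set_mset \<nu> \<subseteq> {..d}" using a
      by (auto dest!: mem_le_sum_mset)
    ultimately show "\<nu> \<in> (\<Union>k\<le>d. multisets_of_size {..d} k)"
      by (auto simp: multisets_of_size_def)
  qed
qed auto

definition Pset :: "series \<Rightarrow> nat multiset set" where
  "Pset p = {\<nu>\<in>partitions. coeffP p \<nu> \<noteq> 0}"

lemma finite_Pset: assumes "p \<in> Lam" shows "finite (Pset p)"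
proof -
  obtain d where d: "\<forall>\<beta>. p \<beta> \<noteq> 0 \<longrightarrow> mdeg \<beta> \<le> d" using assms unfolding Lam_def by auto
  have "Pset p \<subseteq> {\<nu>\<in>partitions. sum_mset \<nu> \<le> d}"
  proof
    fix \<nu> assume "\<nu> \<in> Pset p"
    then have "\<nu> \<in> partitions" "p (mono \<nu>) \<noteq> 0" by (auto simp: Pset_def coeffP_def)
    then show "\<nu> \<in> {\<nu>\<in>partitions. sum_mset \<nu> \<le> d}"
      using d mdeg_parts[of "mono \<nu>"] parts_mono supp_mono by fastforce
  qed
  then show ?thesis using finite_partitions_bounded finite_subset by blast
qed
lemma Lam_expand:
  assumes "p \<in> Lam"
  shows "p = (\<lambda>\<beta>. \<Sum>\<nu>\<in>Pset p. coeffP p \<nu> * msym \<nu> \<beta>)"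
proof
  fix \<beta>
  show "p \<beta> = (\<Sum>\<nu>\<in>Pset p. coeffP p \<nu> * msym \<nu> \<beta>)"
  proof (cases "finite (supp \<beta>)")
    case False
    then show ?thesis using assms by (auto simp: Lam_def msym_def)
  next
    case True
    have pm: "parts (mono (parts \<beta>)) = parts \<beta>" using parts_mono partition_parts by blast
    have eq: "coeffP p (parts \<beta>) = p \<beta>" unfolding coeffP_def
      by (rule Lam_sym[OF assms True]) (use pm supp_mono partition_parts in auto)
    have "(\<Sum>\<nu>\<in>Pset p. coeffP p \<nu> * msym \<nu> \<beta>) = (\<Sum>\<nu>\<in>Pset p. if \<nu> = parts \<beta> then coeffP p \<nu> else 0)"
      using True by (intro sum.cong) (auto simp: msym_def)
    also have "\<dots> = (if parts \<beta> \<in> Pset p then coeffP p (parts \<beta>) else 0)"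
      using finite_Pset[OF assms] by (simp add: sum.delta')
    also have "\<dots> = p \<beta>" using eq partition_parts by (auto simp: Pset_def)
    finally show ?thesis by simp
  qed
qed

lemma msym_mono: "\<nu> \<in> partitions \<Longrightarrow> msym \<mu> (mono \<nu>) = (if \<mu> = \<nu> then 1 else 0)"
  using supp_mono[of \<nu>] parts_mono[of \<nu>] by (auto simp: msym_def)

lemma coeffP_comb:
  assumes "finite J" "\<nu> \<in> partitions"
  shows "coeffP (\<lambda>\<beta>. \<Sum>j\<in>J. c j * msym (f j) \<beta>) \<nu> = (\<Sum>j\<in>{j\<in>J. f j = \<nu>}. c j)"
proof -
  have "coeffP (\<lambda>\<beta>. \<Sum>j\<in>J. c j * msym (f j) \<beta>) \<nu> = (\<Sum>j\<in>J. if f j = \<nu> then c j else 0)"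
    unfolding coeffP_def using msym_mono[OF assms(2)] by (intro sum.cong) auto
  also have "\<dots> = (\<Sum>j\<in>{j\<in>J. f j = \<nu>}. c j)" using assms(1) by (simp add: sum.inter_filter)
  finally show ?thesis .
qed

lemma Dop_comb:
  assumes "finite J" "\<forall>j\<in>J. f j \<in> partitions"
  shows "Dop i (\<lambda>\<beta>. \<Sum>j\<in>J. c j * msym (f j) \<beta>) =
     (\<lambda>\<beta>. \<Sum>j\<in>J. c j * (if i \<in># f j then of_nat (fact i) * msym (f j - {#i#}) \<beta> else 0))"
proof
  fix \<beta>
  let ?q = "\<lambda>\<beta>. \<Sum>j\<in>J. c j * msym (f j) \<beta>"
  let ?g = "\<lambda>\<nu>. (if i \<in># \<nu> then of_nat (fact i) * msym (\<nu> - {#i#}) \<beta> else 0)"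
  have sub: "{\<nu>\<in>partitions. coeffP ?q \<nu> \<noteq> 0} \<subseteq> f ` J"
  proof
    fix \<nu> assume "\<nu> \<in> {\<nu>\<in>partitions. coeffP ?q \<nu> \<noteq> 0}"
    then have "(\<Sum>j\<in>{j\<in>J. f j = \<nu>}. c j) \<noteq> 0" using coeffP_comb[OF assms(1)] by auto
    then have "{j\<in>J. f j = \<nu>} \<noteq> {}" by (metis sum.empty)
    then show "\<nu> \<in> f ` J" by auto
  qed
  have "Dop i ?q \<beta> = (\<Sum>\<nu>\<in>{\<nu>\<in>partitions. coeffP ?q \<nu> \<noteq> 0}. coeffP ?q \<nu> * ?g \<nu>)"
    by (simp add: Dop_def)
  also have "\<dots> = (\<Sum>\<nu>\<in>f ` J. coeffP ?q \<nu> * ?g \<nu>)"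
    using sub assms by (intro sum.mono_neutral_left) auto
  also have "\<dots> = (\<Sum>\<nu>\<in>f ` J. (\<Sum>j\<in>{j\<in>J. f j = \<nu>}. c j) * ?g \<nu>)"
    using assms coeffP_comb[OF assms(1)] by (intro sum.cong) auto
  also have "\<dots> = (\<Sum>\<nu>\<in>f ` J. (\<Sum>j\<in>{j\<in>J. f j = \<nu>}. c j * ?g (f j)))"
    by (intro sum.cong refl) (auto simp: sum_distrib_right)
  also have "\<dots> = (\<Sum>j\<in>J. c j * ?g (f j))"
    using assms(1) by (intro sum.group) auto
  finally show "Dop i ?q \<beta> = (\<Sum>j\<in>J. c j * ?g (f j))" .
qed

lemma F_comb:
  assumes "finite J" "\<forall>j\<in>J. f j \<in> partitions"
  shows "(\<lambda>\<beta>. Dop i (\<lambda>\<beta>. \<Sum>j\<in>J. c j * msym (f j) \<beta>) \<beta> / of_nat (fact i)) =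
     (\<lambda>\<beta>. \<Sum>j\<in>J. (if i \<in># f j then c j else 0) * msym (f j - {#i#}) \<beta>)"
  unfolding Dop_comb[OF assms]
  by (auto simp: sum_divide_distrib intro!: sum.cong)

lemma partitions_sub: "\<nu> \<in> partitions \<Longrightarrow> \<mu> \<subseteq># \<nu> \<Longrightarrow> \<mu> \<in> partitions"
  by (auto simp: partitions_def dest: mset_subset_eqD)

lemma partitions_diff: "\<nu> \<in> partitions \<Longrightarrow> \<nu> - \<mu> \<in> partitions"
  by (auto simp: partitions_def dest: in_diffD)

lemma mset_step: "A \<subseteq># M \<Longrightarrow> (x \<in># M - A) = (add_mset x A \<subseteq># M)"
  by (metis single_subset_iff add_mset_add_single subset_mset.add_diff_inverse subset_mset.add_le_cancel_left)

lemma mset_step2: "A \<subseteq># M \<Longrightarrow> M - A - {#x#} = M - add_mset x A"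
  by simp

lemma mset_step3: "add_mset x A \<subseteq># M \<Longrightarrow> A \<subseteq># M"
  by (meson mset_subset_eq_insertD subset_mset.nless_le)

lemma foldr_comb:
  assumes "finite J" "\<forall>j\<in>J. f j \<in> partitions"
  shows "foldr (\<lambda>i q. (\<lambda>\<beta>. Dop i q \<beta> / of_nat (fact i))) xs (\<lambda>\<beta>. \<Sum>j\<in>J. c j * msym (f j) \<beta>) =
     (\<lambda>\<beta>. \<Sum>j\<in>J. (if mset xs \<subseteq># f j then c j else 0) * msym (f j - mset xs) \<beta>)"
proof (induction xs)
  case Nil
  then show ?case by simp
next
  case (Cons x xs)
  have "foldr (\<lambda>i q. (\<lambda>\<beta>. Dop i q \<beta> / of_nat (fact i))) (x # xs) (\<lambda>\<beta>. \<Sum>j\<in>J. c j * msym (f j) \<beta>)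
     = (\<lambda>\<beta>. Dop x (\<lambda>\<beta>. \<Sum>j\<in>J. (if mset xs \<subseteq># f j then c j else 0) * msym (f j - mset xs) \<beta>) \<beta> / of_nat (fact x))"
    using Cons by simp
  also have "\<dots> = (\<lambda>\<beta>. \<Sum>j\<in>J. (if x \<in># f j - mset xs then (if mset xs \<subseteq># f j then c j else 0) else 0) * msym (f j - mset xs - {#x#}) \<beta>)"
    by (rule F_comb) (use assms partitions_diff in auto)
  also have "\<dots> = (\<lambda>\<beta>. \<Sum>j\<in>J. (if mset (x # xs) \<subseteq># f j then c j else 0) * msym (f j - mset (x # xs)) \<beta>)"
  proof (intro ext sum.cong refl)
    fix \<beta> j
    show "(if x \<in># f j - mset xs then (if mset xs \<subseteq># f j then c j else 0) else 0) * msym (f j - mset xs - {#x#}) \<beta> =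
          (if mset (x # xs) \<subseteq># f j then c j else 0) * msym (f j - mset (x # xs)) \<beta>"
      using mset_step[of "mset xs" "f j" x] mset_step2[of "mset xs" "f j" x] mset_step3[of x "mset xs" "f j"]
      by (cases "mset xs \<subseteq># f j") auto
  qed
  finally show ?case .
qed

lemma Dlam_Lam:
  assumes "p \<in> Lam"
  shows "Dlam \<mu> p = (\<lambda>\<beta>. \<Sum>\<nu>\<in>Pset p. (if \<mu> \<subseteq># \<nu> then coeffP p \<nu> else 0) * msym (\<nu> - \<mu>) \<beta>)"
proof -
  have "Dlam \<mu> p = Dlam \<mu> (\<lambda>\<beta>. \<Sum>\<nu>\<in>Pset p. coeffP p \<nu> * msym (id \<nu>) \<beta>)"
    using Lam_expand[OF assms] by simp
  also have "\<dots> = (\<lambda>\<beta>. \<Sum>\<nu>\<in>Pset p. (if \<mu> \<subseteq># id \<nu> then coeffP p \<nu> else 0) * msym (id \<nu> - \<mu>) \<beta>)"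
    unfolding Dlam_def
    by (subst foldr_comb) (use finite_Pset[OF assms] in \<open>auto simp: Pset_def\<close>)
  finally show ?thesis by simp
qed

lemma supp_shiftmon: "supp (shiftmon k \<gamma>) = (if k = 0 then {} else {0}) \<union> Suc ` supp \<gamma>"
proof (rule set_eqI)
  fix i show "i \<in> supp (shiftmon k \<gamma>) \<longleftrightarrow> i \<in> (if k = 0 then {} else {0}) \<union> Suc ` supp \<gamma>"
    by (cases i) (auto simp: supp_def shiftmon_def)
qed

lemma shiftmon_0: "shiftmon k \<gamma> 0 = k"
  by (simp add: shiftmon_def)

lemma finite_supp_shiftmon: "finite (supp (shiftmon k \<gamma>)) \<longleftrightarrow> finite (supp \<gamma>)"
  by (simp add: supp_shiftmon finite_image_iff)

lemma parts_shiftmon: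
  assumes "finite (supp \<gamma>)"
  shows "parts (shiftmon k \<gamma>) = (if k = 0 then {#} else {#k#}) + parts \<gamma>"
proof -
  have im: "image_mset (shiftmon k \<gamma>) (mset_set (Suc ` supp \<gamma>)) = parts \<gamma>"
  proof -
    have "image_mset (shiftmon k \<gamma>) (mset_set (Suc ` supp \<gamma>)) = image_mset (shiftmon k \<gamma>) (image_mset Suc (mset_set (supp \<gamma>)))"
      by (simp add: image_mset_mset_set)
    also have "\<dots> = parts \<gamma>" by (simp add: multiset.map_comp comp_def shiftmon_def parts_def)
    finally show ?thesis .
  qed
  show ?thesis
  proof (cases "k = 0")
    case True
    then show ?thesis using im by (simp add: parts_def supp_shiftmon)
  next
    case False
    have "0 \<notin> Suc ` supp \<gamma>" by auto
    then have "mset_set (insert 0 (Suc ` supp \<gamma>)) = add_mset 0 (mset_set (Suc ` supp \<gamma>))"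
      using assms by simp
    then have "parts (shiftmon k \<gamma>) = image_mset (shiftmon k \<gamma>) (add_mset 0 (mset_set (Suc ` supp \<gamma>)))"
      using False by (simp add: parts_def supp_shiftmon)
    also have "\<dots> = add_mset k (parts \<gamma>)" using im by (simp add: shiftmon_0)
    finally show ?thesis using False by simp
  qed
qed

lemma Lam_shift_bound:
  assumes "q \<in> Lam"
  obtains d where "\<And>k \<gamma>. q (shiftmon k \<gamma>) \<noteq> 0 \<Longrightarrow> k \<le> d"
proof -
  obtain d where d: "\<And>\<beta>. q \<beta> \<noteq> 0 \<Longrightarrow> mdeg \<beta> \<le> d" and f: "\<And>\<beta>. q \<beta> \<noteq> 0 \<Longrightarrow> finite (supp \<beta>)"
    using assms unfolding Lam_def by auto
  have "k \<le> d" if "q (shiftmon k \<gamma>) \<noteq> 0" for k \<gamma>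
  proof -
    have fin: "finite (supp \<gamma>)" using f[OF that] finite_supp_shiftmon by blast
    have "k \<le> mdeg (shiftmon k \<gamma>)"
      using mdeg_parts[of "shiftmon k \<gamma>"] fin finite_supp_shiftmon parts_shiftmon[OF fin, of k]
      by auto
    then show ?thesis using d[OF that] by simp
  qed
  then show ?thesis using that by blast
qed

lemma Eop_poly:
  assumes "\<And>k. q (shiftmon k \<gamma>) \<noteq> 0 \<Longrightarrow> k \<le> N"
  shows "Eop a q \<gamma> = (\<Sum>k\<le>N. q (shiftmon k \<gamma>) * a ^ k)"
proof -
  have "Eop a q \<gamma> = (\<Sum>k\<in>{k. q (shiftmon k \<gamma>) \<noteq> 0}. a ^ k * q (shiftmon k \<gamma>))"
    by (simp add: Eop_def)
  also have "\<dots> = (\<Sum>k\<le>N. a ^ k * q (shiftmon k \<gamma>))"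
    using assms by (intro sum.mono_neutral_left) auto
  finally show ?thesis by (simp add: mult.commute)
qed

lemma add_mset_eq_iff': "(add_mset k A = M) \<longleftrightarrow> (k \<in># M \<and> A = M - {#k#})"
  by (metis add_mset_remove_trivial insert_DiffM union_single_eq_member)

lemma Eop_msym:
  assumes "\<mu> \<in> partitions"
  shows "Eop a (msym \<mu>) = (\<lambda>\<gamma>. \<Sum>j\<in>insert 0 (set_mset \<mu>). a ^ j * msym (\<mu> - {#j#}) \<gamma>)"
proof
  fix \<gamma>
  let ?I = "insert 0 (set_mset \<mu>)"
  show "Eop a (msym \<mu>) \<gamma> = (\<Sum>j\<in>?I. a ^ j * msym (\<mu> - {#j#}) \<gamma>)"
  proof (cases "finite (supp \<gamma>)")
    case False
    then show ?thesis by (simp add: Eop_def msym_def finite_supp_shiftmon)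
  next
    case True
    have 0: "0 \<notin># \<mu>" using assms by (simp add: partitions_def)
    have K: "{k. msym \<mu> (shiftmon k \<gamma>) \<noteq> 0} = {j\<in>?I. parts \<gamma> = \<mu> - {#j#}}"
      using True 0 by (auto simp: msym_def finite_supp_shiftmon parts_shiftmon add_mset_eq_iff')
    have "Eop a (msym \<mu>) \<gamma> = (\<Sum>k\<in>{j\<in>?I. parts \<gamma> = \<mu> - {#j#}}. a ^ k)"
      unfolding Eop_def K
      by (intro sum.cong refl) (use True 0 in \<open>auto simp: msym_def finite_supp_shiftmon parts_shiftmon add_mset_eq_iff'\<close>)
    also have "\<dots> = (\<Sum>j\<in>?I. if parts \<gamma> = \<mu> - {#j#} then a ^ j else 0)"
      by (intro sum.inter_filter) simp
    also have "\<dots> = (\<Sum>j\<in>?I. a ^ j * msym (\<mu> - {#j#}) \<gamma>)"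
      using True by (intro sum.cong refl) (auto simp: msym_def)
    finally show ?thesis .
  qed
qed

lemma theta_shift:
  assumes lin: "linear_on_Lam \<theta>" and sh: "\<forall>a::complex. \<forall>p\<in>Lam. Eop a (\<theta> p) = \<theta> (Eop a p)"
    and \<mu>: "\<mu> \<in> partitions"
  shows "\<theta> (msym \<mu>) (shiftmon k \<gamma>) = (if k \<in> insert 0 (set_mset \<mu>) then \<theta> (msym (\<mu> - {#k#})) \<gamma> else 0)"
proof -
  let ?I = "insert 0 (set_mset \<mu>)"
  let ?T = "\<lambda>j. \<theta> (msym (\<mu> - {#j#})) \<gamma>"
  have L: "\<theta> (msym \<mu>) \<in> Lam" using lin msym_Lam unfolding linear_on_Lam_def by blast
  obtain d where d: "\<And>k \<gamma>. \<theta> (msym \<mu>) (shiftmon k \<gamma>) \<noteq> 0 \<Longrightarrow> k \<le> d"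
    using Lam_shift_bound[OF L] by blast
  define N where "N = d + sum_mset \<mu> + k"
  have IN: "?I \<subseteq> {..N}"
  proof
    fix x assume "x \<in> ?I"
    then show "x \<in> {..N}" using mem_le_sum_mset[of x \<mu>] by (cases "x = 0") (auto simp: N_def)
  qed
  have dN: "k' \<le> N" if "\<theta> (msym \<mu>) (shiftmon k' \<gamma>) \<noteq> 0" for k'
  proof -
    have "k' \<le> d" using d that by blast
    then show ?thesis by (simp add: N_def)
  qed
  have kN: "k \<le> N" by (simp add: N_def)
  have coef: "(\<Sum>i\<le>N. \<theta> (msym \<mu>) (shiftmon i \<gamma>) * a ^ i) = (\<Sum>i\<le>N. (if i \<in> ?I then ?T i else 0) * a ^ i)" for a
  proof -
    have EQ: "Eop a (\<theta> (msym \<mu>)) = \<theta> (Eop a (msym \<mu>))" using sh msym_Lam[of \<mu>] by blast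
    have TS: "\<theta> (\<lambda>\<gamma>. \<Sum>j\<in>?I. a ^ j * msym (\<mu> - {#j#}) \<gamma>) = (\<lambda>\<gamma>. \<Sum>j\<in>?I. a ^ j * \<theta> (msym (\<mu> - {#j#})) \<gamma>)"
      by (rule theta_sum[OF lin]) (simp_all add: msym_Lam)
    have "(\<Sum>i\<le>N. \<theta> (msym \<mu>) (shiftmon i \<gamma>) * a ^ i) = Eop a (\<theta> (msym \<mu>)) \<gamma>"
      by (rule Eop_poly[symmetric]) (rule dN)
    also have "\<dots> = \<theta> (Eop a (msym \<mu>)) \<gamma>" using EQ by simp
    also have "\<dots> = \<theta> (\<lambda>\<gamma>. \<Sum>j\<in>?I. a ^ j * msym (\<mu> - {#j#}) \<gamma>) \<gamma>"
      by (simp add: Eop_msym[OF \<mu>])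
    also have "\<dots> = (\<Sum>j\<in>?I. a ^ j * ?T j)"
      unfolding TS by (rule refl)
    also have "\<dots> = (\<Sum>i\<in>?I. (if i \<in> ?I then ?T i else 0) * a ^ i)"
      by (intro sum.cong refl) (simp add: mult.commute)
    also have "\<dots> = (\<Sum>i\<le>N. (if i \<in> ?I then ?T i else 0) * a ^ i)"
      by (rule sum.mono_neutral_left) (simp, rule IN, simp)
    finally show ?thesis .
  qed
  have "\<forall>i\<le>N. \<theta> (msym \<mu>) (shiftmon i \<gamma>) = (if i \<in> ?I then ?T i else 0)"
    using polyfun_eq_coeffs[where c="\<lambda>i. \<theta> (msym \<mu>) (shiftmon i \<gamma>)" and d="\<lambda>i. if i \<in> ?I then ?T i else 0" and n=N] coef
    by blast
  then show ?thesis using kN by blast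
qed

lemma theta_msym_bounded:
  assumes lin: "linear_on_Lam \<theta>" and sh: "\<forall>a::complex. \<forall>p\<in>Lam. Eop a (\<theta> p) = \<theta> (Eop a p)"
  shows "\<forall>\<beta> \<mu>. \<mu> \<in> partitions \<longrightarrow> (\<forall>i\<ge>n. \<beta> i = 0) \<longrightarrow>
     \<theta> (msym \<mu>) \<beta> = (if parts \<beta> \<subseteq># \<mu> then eps (\<theta> (msym (\<mu> - parts \<beta>))) else 0)"
proof (induction n)
  case 0
  show ?case
  proof (intro allI impI)
    fix \<beta> :: "nat \<Rightarrow> nat" and \<mu> assume "\<forall>i\<ge>0. \<beta> i = 0"
    then have b: "\<beta> = (\<lambda>_. 0)" by auto
    have "parts \<beta> = {#}" by (simp add: b parts_def supp_def)
    then show "\<theta> (msym \<mu>) \<beta> = (if parts \<beta> \<subseteq># \<mu> then eps (\<theta> (msym (\<mu> - parts \<beta>))) else 0)"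
      by (simp add: b eps_def)
  qed
next
  case (Suc n)
  show ?case
  proof (intro allI impI)
    fix \<beta> :: "nat \<Rightarrow> nat" and \<mu> assume \<mu>: "\<mu> \<in> partitions" and z: "\<forall>i\<ge>Suc n. \<beta> i = 0"
    define \<gamma> where "\<gamma> = (\<lambda>i. \<beta> (Suc i))"
    define k where "k = \<beta> 0"
    have b: "\<beta> = shiftmon k \<gamma>" by (auto simp: shiftmon_def \<gamma>_def k_def fun_eq_iff)
    have zg: "\<forall>i\<ge>n. \<gamma> i = 0" using z by (simp add: \<gamma>_def)
    have fg: "finite (supp \<gamma>)"
      by (rule finite_subset[of _ "{..<n}"]) (use zg in \<open>auto simp: supp_def not_less[symmetric]\<close>)
    have pb: "parts \<beta> = (if k = 0 then {#} else {#k#}) + parts \<gamma>"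
      using parts_shiftmon[OF fg] b by simp
    have 0: "0 \<notin># \<mu>" using \<mu> by (simp add: partitions_def)
    have T: "\<theta> (msym \<mu>) \<beta> = (if k \<in> insert 0 (set_mset \<mu>) then \<theta> (msym (\<mu> - {#k#})) \<gamma> else 0)"
      unfolding b by (rule theta_shift[OF lin sh \<mu>])
    show "\<theta> (msym \<mu>) \<beta> = (if parts \<beta> \<subseteq># \<mu> then eps (\<theta> (msym (\<mu> - parts \<beta>))) else 0)"
    proof (cases "k = 0")
      case True
      have IH0: "\<theta> (msym \<mu>) \<gamma> = (if parts \<gamma> \<subseteq># \<mu> then eps (\<theta> (msym (\<mu> - parts \<gamma>))) else 0)"
        using Suc.IH zg \<mu> by blast
      have "\<mu> - {#0#} = \<mu>" using 0 by (simp add: diff_single_trivial)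
      then show ?thesis using T pb IH0 True by simp
    next
      case False
      show ?thesis
      proof (cases "k \<in># \<mu>")
        case True
        have "\<theta> (msym (\<mu> - {#k#})) \<gamma> = (if parts \<gamma> \<subseteq># \<mu> - {#k#} then eps (\<theta> (msym (\<mu> - {#k#} - parts \<gamma>))) else 0)"
          using Suc.IH zg partitions_diff[OF \<mu>] by blast
        moreover have "(parts \<gamma> \<subseteq># \<mu> - {#k#}) = (add_mset k (parts \<gamma>) \<subseteq># \<mu>)"
          using True by (simp add: insert_subset_eq_iff)
        moreover have "\<mu> - {#k#} - parts \<gamma> = \<mu> - add_mset k (parts \<gamma>)" by simp
        ultimately show ?thesis using T pb False True by simp
      next
        case nk: False
        then have "\<not> add_mset k (parts \<gamma>) \<subseteq># \<mu>" by (simp add: insert_subset_eq_iff)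
        then show ?thesis using T pb False nk by simp
      qed
    qed
  qed
qed

lemma sub_iff: "(\<mu> \<subseteq># (\<nu>::nat multiset) \<and> P = \<nu> - \<mu>) \<longleftrightarrow> (P \<subseteq># \<nu> \<and> \<mu> = \<nu> - P)"
  by (metis add_diff_cancel_left' diff_subset_eq_self subset_mset.diff_add)

lemma finite_submsets: "finite {\<mu>. \<mu> \<subseteq># (\<nu>::nat multiset)}"
proof (rule finite_subset)
  show "{\<mu>. \<mu> \<subseteq># \<nu>} \<subseteq> (\<Union>k\<le>size \<nu>. multisets_of_size (set_mset \<nu>) k)"
  proof
    fix \<mu> assume "\<mu> \<in> {\<mu>. \<mu> \<subseteq># \<nu>}"
    then have "\<mu> \<subseteq># \<nu>" by simp
    have "size \<mu> \<le> size \<nu>" by (rule size_mset_mono) fact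
    moreover have "set_mset \<mu> \<subseteq> set_mset \<nu>" by (rule set_mset_mono) fact
    ultimately show "\<mu> \<in> (\<Union>k\<le>size \<nu>. multisets_of_size (set_mset \<nu>) k)"
      by (auto simp: multisets_of_size_def)
  qed
qed auto

lemma theta_msym:
  assumes lin: "linear_on_Lam \<theta>" and sh: "\<forall>a::complex. \<forall>p\<in>Lam. Eop a (\<theta> p) = \<theta> (Eop a p)"
    and \<mu>: "\<mu> \<in> partitions"
  shows "\<theta> (msym \<mu>) \<beta> = (if finite (supp \<beta>) \<and> parts \<beta> \<subseteq># \<mu> then eps (\<theta> (msym (\<mu> - parts \<beta>))) else 0)"
proof (cases "finite (supp \<beta>)")
  case True
  then obtain n where n: "supp \<beta> \<subseteq> {..<n}" using finite_nat_bounded by blast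
  have "\<forall>i\<ge>n. \<beta> i = 0"
  proof (intro allI impI)
    fix i assume "n \<le> i"
    then have "i \<notin> supp \<beta>" using n by auto
    then show "\<beta> i = 0" by (simp add: supp_def)
  qed
  then show ?thesis using theta_msym_bounded[OF lin sh, of n] \<mu> True by simp
next
  case False
  have "\<theta> (msym \<mu>) \<in> Lam" using lin msym_Lam unfolding linear_on_Lam_def by blast
  then have "\<theta> (msym \<mu>) \<beta> = 0" using False unfolding Lam_def by blast
  then show ?thesis using False by simp
qed

lemma per_nu:
  assumes lin: "linear_on_Lam \<theta>" and sh: "\<forall>a::complex. \<forall>p\<in>Lam. Eop a (\<theta> p) = \<theta> (Eop a p)"
    and \<nu>: "\<nu> \<in> partitions" and M: "finite M" "\<And>\<mu>. \<mu> \<subseteq># \<nu> \<Longrightarrow> \<mu> \<in> M"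
  shows "\<theta> (msym \<nu>) \<beta> = (\<Sum>\<mu>\<in>M. if \<mu> \<subseteq># \<nu> then eps (\<theta> (msym \<mu>)) * msym (\<nu> - \<mu>) \<beta> else 0)"
proof (cases "finite (supp \<beta>)")
  case False
  have Z: "\<And>\<mu>. msym (\<nu> - \<mu>) \<beta> = 0" using False by (simp add: msym_def)
  have "(\<Sum>\<mu>\<in>M. if \<mu> \<subseteq># \<nu> then eps (\<theta> (msym \<mu>)) * msym (\<nu> - \<mu>) \<beta> else 0) = 0"
    by (rule sum.neutral) (simp add: Z)
  then show ?thesis using theta_msym[OF lin sh \<nu>, of \<beta>] False by simp
next
  case True
  have "(\<Sum>\<mu>\<in>M. if \<mu> \<subseteq># \<nu> then eps (\<theta> (msym \<mu>)) * msym (\<nu> - \<mu>) \<beta> else 0)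
      = (\<Sum>\<mu>\<in>M. if \<mu> = \<nu> - parts \<beta> then (if parts \<beta> \<subseteq># \<nu> then eps (\<theta> (msym \<mu>)) else 0) else 0)"
  proof (intro sum.cong refl)
    fix \<mu>
    show "(if \<mu> \<subseteq># \<nu> then eps (\<theta> (msym \<mu>)) * msym (\<nu> - \<mu>) \<beta> else 0) =
          (if \<mu> = \<nu> - parts \<beta> then (if parts \<beta> \<subseteq># \<nu> then eps (\<theta> (msym \<mu>)) else 0) else 0)"
      using sub_iff[of \<mu> \<nu> "parts \<beta>"] True by (auto simp: msym_def)
  qed
  also have "\<dots> = (if parts \<beta> \<subseteq># \<nu> then eps (\<theta> (msym (\<nu> - parts \<beta>))) else 0)"
    using M by (simp add: sum.delta')
  also have "\<dots> = \<theta> (msym \<nu>) \<beta>" using theta_msym[OF lin sh \<nu>, of \<beta>] True by simp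
  finally show ?thesis by simp
qed

theorem mainTheorem9:
  fixes \<theta> :: "series \<Rightarrow> series"
  assumes "linear_on_Lam \<theta>"
    and "\<forall>a::complex. \<forall>p\<in>Lam. Eop a (\<theta> p) = \<theta> (Eop a p)"
  shows "\<forall>p\<in>Lam. \<theta> p = (\<lambda>\<beta>. \<Sum>\<mu>\<in>{\<mu>\<in>partitions. Dlam \<mu> p \<noteq> (\<lambda>_. 0)}.
            eps (\<theta> (msym \<mu>)) * Dlam \<mu> p \<beta>)"
proof
  fix p assume p: "p \<in> Lam"
  let ?P = "Pset p"
  let ?c = "coeffP p"
  let ?M = "{\<mu>\<in>partitions. Dlam \<mu> p \<noteq> (\<lambda>_. 0)}"
  define M' where "M' = (\<Union>\<nu>\<in>?P. {\<mu>. \<mu> \<subseteq># \<nu>})"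
  let ?e = "\<lambda>\<mu>. eps (\<theta> (msym \<mu>))"
  have fP: "finite ?P" by (rule finite_Pset[OF p])
  have fM': "finite M'" unfolding M'_def using fP finite_submsets by blast
  have Ppart: "?P \<subseteq> partitions" by (auto simp: Pset_def)
  have MM': "?M \<subseteq> M'"
  proof
    fix \<mu> assume "\<mu> \<in> ?M"
    then have "Dlam \<mu> p \<noteq> (\<lambda>_. 0)" by simp
    then obtain \<beta> where "Dlam \<mu> p \<beta> \<noteq> 0" by blast
    then have "(\<Sum>\<nu>\<in>?P. (if \<mu> \<subseteq># \<nu> then ?c \<nu> else 0) * msym (\<nu> - \<mu>) \<beta>) \<noteq> 0"
      using Dlam_Lam[OF p] by metis
    then obtain \<nu> where "\<nu> \<in> ?P" "(if \<mu> \<subseteq># \<nu> then ?c \<nu> else 0) * msym (\<nu> - \<mu>) \<beta> \<noteq> 0"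
      by (meson sum.neutral)
    then show "\<mu> \<in> M'" unfolding M'_def by (auto split: if_splits)
  qed
  have M'part: "M' \<subseteq> partitions" unfolding M'_def using Ppart partitions_sub by blast
  show "\<theta> p = (\<lambda>\<beta>. \<Sum>\<mu>\<in>?M. ?e \<mu> * Dlam \<mu> p \<beta>)"
  proof
    fix \<beta>
    have "(\<Sum>\<mu>\<in>?M. ?e \<mu> * Dlam \<mu> p \<beta>) = (\<Sum>\<mu>\<in>M'. ?e \<mu> * Dlam \<mu> p \<beta>)"
    proof (rule sum.mono_neutral_left[OF fM' MM'], intro ballI)
      fix \<mu> assume "\<mu> \<in> M' - ?M"
      then have "Dlam \<mu> p = (\<lambda>_. 0)" using M'part by auto
      then show "?e \<mu> * Dlam \<mu> p \<beta> = 0" by simp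
    qed
    also have "\<dots> = (\<Sum>\<mu>\<in>M'. ?e \<mu> * (\<Sum>\<nu>\<in>?P. (if \<mu> \<subseteq># \<nu> then ?c \<nu> else 0) * msym (\<nu> - \<mu>) \<beta>))"
      by (intro sum.cong refl) (simp add: Dlam_Lam[OF p])
    also have "\<dots> = (\<Sum>\<mu>\<in>M'. \<Sum>\<nu>\<in>?P. ?c \<nu> * (if \<mu> \<subseteq># \<nu> then ?e \<mu> * msym (\<nu> - \<mu>) \<beta> else 0))"
      unfolding sum_distrib_left by (intro sum.cong refl) simp
    also have "\<dots> = (\<Sum>\<nu>\<in>?P. \<Sum>\<mu>\<in>M'. ?c \<nu> * (if \<mu> \<subseteq># \<nu> then ?e \<mu> * msym (\<nu> - \<mu>) \<beta> else 0))"
      by (rule sum.swap)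
    also have "\<dots> = (\<Sum>\<nu>\<in>?P. ?c \<nu> * (\<Sum>\<mu>\<in>M'. if \<mu> \<subseteq># \<nu> then ?e \<mu> * msym (\<nu> - \<mu>) \<beta> else 0))"
      by (simp add: sum_distrib_left)
    also have "\<dots> = (\<Sum>\<nu>\<in>?P. ?c \<nu> * \<theta> (msym \<nu>) \<beta>)"
    proof (intro sum.cong refl)
      fix \<nu>
      assume nP: "\<nu> \<in> ?P"
      have sub: "\<And>\<mu>. \<mu> \<subseteq># \<nu> \<Longrightarrow> \<mu> \<in> M'" using nP unfolding M'_def by blast
      have "\<nu> \<in> partitions" using nP Ppart by blast
      then have "\<theta> (msym \<nu>) \<beta> = (\<Sum>\<mu>\<in>M'. if \<mu> \<subseteq># \<nu> then ?e \<mu> * msym (\<nu> - \<mu>) \<beta> else 0)"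
        by (rule per_nu[OF assms _ fM' sub])
      then have "(\<Sum>\<mu>\<in>M'. if \<mu> \<subseteq># \<nu> then ?e \<mu> * msym (\<nu> - \<mu>) \<beta> else 0) = \<theta> (msym \<nu>) \<beta>"
        by simp
      then show "?c \<nu> * (\<Sum>\<mu>\<in>M'. if \<mu> \<subseteq># \<nu> then ?e \<mu> * msym (\<nu> - \<mu>) \<beta> else 0) = ?c \<nu> * \<theta> (msym \<nu>) \<beta>"
        by simp
    qed
    also have "\<dots> = \<theta> (\<lambda>\<beta>. \<Sum>\<nu>\<in>?P. ?c \<nu> * msym \<nu> \<beta>) \<beta>"
      using theta_sum[OF assms(1) fP, of msym ?c] msym_Lam by simp
    also have "\<dots> = \<theta> p \<beta>" using Lam_expand[OF p] by simp
    finally show "\<theta> p \<beta> = (\<Sum>\<mu>\<in>?M. ?e \<mu> * Dlam \<mu> p \<beta>)" by simp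
  qed
qed

end
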